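(* Assume the Setting. Then the function $\rho=K1_X$, $\rho(x)=\int_Xk_\infty(x,y)\,d\mu(y)$, is $\mu$-a.e. equal to a constant which is strictly positive (so $1/\rho\in L^\infty(X,\mu)$). If in addition the Continuity Assumption holds, then $\rho|_X$ and $1/\rho|_X$ have continuous representatives.
   Context: Setting: Let $M$ be a metrizable topological manifold, $\Phi^t:M\to M$ a continuous flow, and $\mu$ an ergodic $\Phi^t$-invariant Borel probability measure with compact support $X$. Let $F:M\to\mathbb{R}^d$ be continuous and let $\Delta t>0$ be such that $\Phi^{\Delta t}$ is ergodic for $\mu$. Koopman operators: $U^tf=f\circ\Phi^t$ on $L^2(X,\mu)$; a Koopman eigenfunction is a nonzero $z$ with $U^tz=e^{i\omega t}z$ for all $t$; $\mathcal{D}$ is the closed span of Koopman eigenfunctions and $F_{\mathcal{D}}$ is the componentwise orthogonal projection of $F|_X$ onto $\mathcal{D}$. Continuity Assumption: every Koopman eigenfunction and $F_{\mathcal{D}}$ have continuous representatives on $X$. Kernels: $d_Q^2(x,y)=\frac1Q\sum_{q=0}^{Q-1}\|F(\Phi^{q\Delta t}(x))-F(\Phi^{q\Delta t}(y))\|^2$, $d_\infty^2=\lim_{Q\to\infty}d_Q^2$ where this limit exists (it exists $\mu\times\mu$-a.e.), $k_\infty=e^{-d_\infty^2/\epsilon}$ there (fixed $\epsilon>0$) and $k_\infty=0$ elsewhere. *)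

theory Defs
  imports "HOL-Probability.Probability"
begin

text \<open>Metrizable topological manifold: the carrier type carries a metric (so it is
metrizable and Hausdorff), and every point has an open neighbourhood homeomorphic to an
open subset of an n-dimensional Euclidean space (realised as an n-dimensional linear
subspace of the Euclidean model type 'e), with n the same for all points.\<close>
definition topological_manifold :: "'a::metric_space set \<Rightarrow> 'e::euclidean_space itself \<Rightarrow> bool" where
  "topological_manifold M E \<longleftrightarrow>
     (\<exists>n::nat. \<forall>x\<in>M. \<exists>U V (T::'e set).
        openin (top_of_set M) U \<and> x \<in> U \<and> subspace T \<and> dim T = n \<and>
        openin (top_of_set T) V \<and> U homeomorphic V)"

definition continuous_flow :: "(real \<Rightarrow> 'a::topological_space \<Rightarrow> 'a) \<Rightarrow> bool" where
  "continuous_flow \<Phi> \<longleftrightarrow>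
     continuous_on UNIV (\<lambda>p. \<Phi> (fst p) (snd p)) \<and>
     (\<forall>x. \<Phi> 0 x = x) \<and> (\<forall>s t x. \<Phi> (s + t) x = \<Phi> s (\<Phi> t x))"

definition measure_preserving_map :: "'a measure \<Rightarrow> ('a \<Rightarrow> 'a) \<Rightarrow> bool" where
  "measure_preserving_map \<mu> T \<longleftrightarrow>
     T \<in> measurable \<mu> \<mu> \<and> (\<forall>A\<in>sets \<mu>. emeasure \<mu> (T -` A \<inter> space \<mu>) = emeasure \<mu> A)"

definition ergodic_map :: "'a measure \<Rightarrow> ('a \<Rightarrow> 'a) \<Rightarrow> bool" where
  "ergodic_map \<mu> T \<longleftrightarrow> measure_preserving_map \<mu> T \<and>
     (\<forall>A\<in>sets \<mu>. T -` A \<inter> space \<mu> = A \<longrightarrow> emeasure \<mu> A = 0 \<or> emeasure \<mu> A = 1)"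

definition ergodic_flow :: "'a measure \<Rightarrow> (real \<Rightarrow> 'a \<Rightarrow> 'a) \<Rightarrow> bool" where
  "ergodic_flow \<mu> \<Phi> \<longleftrightarrow> (\<forall>t. measure_preserving_map \<mu> (\<Phi> t)) \<and>
     (\<forall>A\<in>sets \<mu>. (\<forall>t. \<Phi> t -` A \<inter> space \<mu> = A) \<longrightarrow> emeasure \<mu> A = 0 \<or> emeasure \<mu> A = 1)"

definition measure_support :: "'a::topological_space measure \<Rightarrow> 'a set" where
  "measure_support \<mu> = {x. \<forall>U. open U \<longrightarrow> x \<in> U \<longrightarrow> emeasure \<mu> U > 0}"

text \<open>Square-integrable complex functions (elements of L^2(X,\<mu>); \<mu> is concentrated on X).\<close>
definition square_integrable :: "'a measure \<Rightarrow> ('a \<Rightarrow> complex) \<Rightarrow> bool" where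
  "square_integrable \<mu> f \<longleftrightarrow> f \<in> borel_measurable \<mu> \<and> integrable \<mu> (\<lambda>x. (cmod (f x))\<^sup>2)"

definition koopman_eigenfunction :: "'a measure \<Rightarrow> (real \<Rightarrow> 'a \<Rightarrow> 'a) \<Rightarrow> ('a \<Rightarrow> complex) \<Rightarrow> bool" where
  "koopman_eigenfunction \<mu> \<Phi> z \<longleftrightarrow> square_integrable \<mu> z \<and> \<not> (AE x in \<mu>. z x = 0) \<and>
     (\<exists>\<omega>::real. \<forall>t. AE x in \<mu>. z (\<Phi> t x) = exp (\<i> * complex_of_real (\<omega> * t)) * z x)"

definition in_D :: "'a measure \<Rightarrow> (real \<Rightarrow> 'a \<Rightarrow> 'a) \<Rightarrow> ('a \<Rightarrow> complex) \<Rightarrow> bool" where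
  "in_D \<mu> \<Phi> g \<longleftrightarrow> square_integrable \<mu> g \<and>
     (\<forall>e>0. \<exists>(I::nat) (zs::nat \<Rightarrow> 'a \<Rightarrow> complex) (cs::nat \<Rightarrow> complex).
        (\<forall>i<I. koopman_eigenfunction \<mu> \<Phi> (zs i)) \<and>
        (\<integral>x. (cmod (g x - (\<Sum>i<I. cs i * zs i x)))\<^sup>2 \<partial>\<mu>) < e)"

text \<open>G is (a representative of) F_D, the componentwise orthogonal projection of F onto D.\<close>
definition is_F_D :: "'a measure \<Rightarrow> (real \<Rightarrow> 'a \<Rightarrow> 'a) \<Rightarrow> ('a \<Rightarrow> real^'d) \<Rightarrow> ('a \<Rightarrow> complex^'d) \<Rightarrow> bool" where
  "is_F_D \<mu> \<Phi> F G \<longleftrightarrow> (\<forall>j. in_D \<mu> \<Phi> (\<lambda>x. G x $ j) \<and>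
     (\<forall>g. in_D \<mu> \<Phi> g \<longrightarrow>
        (\<integral>x. (complex_of_real (F x $ j) - G x $ j) * cnj (g x) \<partial>\<mu>) = 0))"

definition continuity_assumption ::
  "'a::topological_space measure \<Rightarrow> (real \<Rightarrow> 'a \<Rightarrow> 'a) \<Rightarrow> ('a \<Rightarrow> real^'d) \<Rightarrow> 'a set \<Rightarrow> bool" where
  "continuity_assumption \<mu> \<Phi> F X \<longleftrightarrow>
     (\<forall>z. koopman_eigenfunction \<mu> \<Phi> z \<longrightarrow> (\<exists>g. continuous_on X g \<and> (AE x in \<mu>. z x = g x))) \<and>
     (\<exists>G. is_F_D \<mu> \<Phi> F G \<and> continuous_on X G)"

definition dQ2 :: "(real \<Rightarrow> 'a \<Rightarrow> 'a) \<Rightarrow> ('a \<Rightarrow> real^'d) \<Rightarrow> real \<Rightarrow> nat \<Rightarrow> 'a \<Rightarrow> 'a \<Rightarrow> real" where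
  "dQ2 \<Phi> F \<Delta>t Q x y = (1 / real Q) *
     (\<Sum>q<Q. (norm (F (\<Phi> (real q * \<Delta>t) x) - F (\<Phi> (real q * \<Delta>t) y)))\<^sup>2)"

definition k_inf :: "(real \<Rightarrow> 'a \<Rightarrow> 'a) \<Rightarrow> ('a \<Rightarrow> real^'d) \<Rightarrow> real \<Rightarrow> real \<Rightarrow> 'a \<Rightarrow> 'a \<Rightarrow> real" where
  "k_inf \<Phi> F \<Delta>t \<epsilon> x y =
     (if convergent (\<lambda>Q. dQ2 \<Phi> F \<Delta>t Q x y)
      then exp (- lim (\<lambda>Q. dQ2 \<Phi> F \<Delta>t Q x y) / \<epsilon>) else 0)"

definition rho :: "'a measure \<Rightarrow> 'a set \<Rightarrow> (real \<Rightarrow> 'a \<Rightarrow> 'a) \<Rightarrow> ('a \<Rightarrow> real^'d) \<Rightarrow> real \<Rightarrow> real \<Rightarrow> 'a \<Rightarrow> real" where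
  "rho \<mu> X \<Phi> F \<Delta>t \<epsilon> x = (LINT y:X|\<mu>. k_inf \<Phi> F \<Delta>t \<epsilon> x y)"

end

theory Submission
  imports Defs
begin


lemma measurable_funpow_self:
  assumes "T \<in> measurable M M" shows "(T ^^ n) \<in> measurable M M"
  by (induction n) (auto intro: measurable_compose[OF _ assms])

lemma birk_sum_shift: "(\<Sum>k<Suc n. g ((T^^k) x)) = g x + (\<Sum>k<n. g ((T^^k) (T x)))"
  unfolding sum.lessThan_Suc_shift by (simp add: funpow_Suc_right del: funpow.simps)

lemma maximal_ergodic:
  fixes g :: "'a \<Rightarrow> real"
  assumes P: "prob_space M" and Tm: "T \<in> measurable M M" and Tp: "distr M M T = M"
    and gm[measurable]: "g \<in> borel_measurable M" and gb: "\<And>x. x \<in> space M \<Longrightarrow> \<bar>g x\<bar> \<le> B"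
  shows "0 \<le> (\<integral>x. indicator {x\<in>space M. \<exists>n. 0 < (\<Sum>k<n. g ((T^^k) x))} x * g x \<partial>M)"
proof -
  interpret prob_space M by fact
  define S where "S n x = (\<Sum>k<n. g ((T^^k) x))" for n x
  define Mx where "Mx N x = Max ((\<lambda>n. S n x) ` {..N})" for N x
  have Tkm[measurable]: "\<And>k. (T^^k) \<in> measurable M M" using measurable_funpow_self[OF Tm] .
  have Tm'[measurable]: "T \<in> measurable M M" by fact
  have Sm[measurable]: "\<And>n. S n \<in> borel_measurable M" unfolding S_def by measurable
  have Mxm[measurable]: "\<And>N. Mx N \<in> borel_measurable M" unfolding Mx_def by measurable
  have Sb: "\<bar>S n x\<bar> \<le> real n * B" if "x \<in> space M" for n x
  proof -
    have "\<bar>S n x\<bar> \<le> (\<Sum>k<n. \<bar>g ((T^^k) x)\<bar>)" unfolding S_def by (rule sum_abs)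
    also have "\<dots> \<le> (\<Sum>k<n. B)"
      by (intro sum_mono gb) (use that Tkm in \<open>auto intro: measurable_space\<close>)
    finally show ?thesis by simp
  qed
  have Bnn: "0 \<le> B" if "x \<in> space M" for x using gb[OF that] by linarith
  have Mx_in: "Mx N x \<in> (\<lambda>n. S n x) ` {..N}" for N x unfolding Mx_def by (intro Max_in) auto
  have Mx_ge: "S n x \<le> Mx N x" if "n \<le> N" for n N x unfolding Mx_def by (intro Max_ge) (use that in auto)
  have S0: "S 0 x = 0" for x by (simp add: S_def)
  have Mx_nn: "0 \<le> Mx N x" for N x using Mx_ge[of 0 N x] S0 by simp
  have Mxb: "\<bar>Mx N x\<bar> \<le> real N * B" if "x \<in> space M" for N x
  proof -
    obtain n where n: "n \<le> N" "Mx N x = S n x" using Mx_in[of N x] by auto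
    have "\<bar>S n x\<bar> \<le> real n * B" by (rule Sb[OF that])
    also have "\<dots> \<le> real N * B" using n Bnn[OF that] by (intro mult_right_mono) auto
    finally show ?thesis using n by simp
  qed
  have Mxi: "integrable M (Mx N)" for N
    by (rule integrable_const_bound[where B="real N * B"]) (auto intro!: AE_I2 Mxb)
  have MxTi: "integrable M (\<lambda>x. Mx N (T x))" for N
    by (rule integrable_const_bound[where B="real N * B"])
       (auto intro!: AE_I2 Mxb intro: measurable_space[OF Tm])
  define P where "P N = {x\<in>space M. 0 < Mx N x}" for N
  have Pm[measurable]: "P N \<in> sets M" for N unfolding P_def by measurable
  have key: "Mx N x - Mx N (T x) \<le> indicator (P N) x * g x" if x: "x \<in> space M" for N x
  proof (cases "0 < Mx N x")
    case False
    then have "Mx N x = 0" using Mx_nn[of N x] by linarith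
    then show ?thesis using False Mx_nn[of N "T x"] by (simp add: P_def)
  next
    case True
    obtain n where n: "n \<le> N" "Mx N x = S n x" using Mx_in[of N x] by auto
    with True S0 obtain m where m: "n = Suc m" by (cases n) auto
    have "S n x = g x + S m (T x)" unfolding S_def m by (rule birk_sum_shift)
    also have "\<dots> \<le> g x + Mx N (T x)" using Mx_ge[of m N "T x"] n m by simp
    finally show ?thesis using True n x by (simp add: P_def)
  qed
  have gi: "integrable M (\<lambda>x. indicator (P N) x * g x)" for N
    by (rule integrable_const_bound[where B=B])
       (auto intro!: AE_I2 simp: indicator_def gb abs_mult Bnn)
  have IN: "0 \<le> (\<integral>x. indicator (P N) x * g x \<partial>M)" for N
  proof -
    have "(\<integral>x. Mx N (T x) \<partial>M) = integral\<^sup>L (distr M M T) (Mx N)"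
      by (rule integral_distr[symmetric]) auto
    also have "\<dots> = (\<integral>x. Mx N x \<partial>M)" using Tp by simp
    finally have eq: "(\<integral>x. Mx N (T x) \<partial>M) = (\<integral>x. Mx N x \<partial>M)" .
    have "(\<integral>x. Mx N x - Mx N (T x) \<partial>M) \<le> (\<integral>x. indicator (P N) x * g x \<partial>M)"
      by (intro integral_mono Bochner_Integration.integrable_diff Mxi MxTi gi key)
    moreover have "(\<integral>x. Mx N x - Mx N (T x) \<partial>M) = 0"
      using eq Mxi MxTi by simp
    ultimately show ?thesis by simp
  qed
  define E where "E = {x\<in>space M. \<exists>n. 0 < (\<Sum>k<n. g ((T^^k) x))}"
  have E_eq: "E = {x\<in>space M. \<exists>n. 0 < S n x}" unfolding E_def S_def by simp
  have Em[measurable]: "E \<in> sets M" unfolding E_eq by measurable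
  have lim: "(\<lambda>N. \<integral>x. indicator (P N) x * g x \<partial>M) \<longlonglongrightarrow> (\<integral>x. indicator E x * g x \<partial>M)"
  proof (rule integral_dominated_convergence[where w="\<lambda>_. B"])
    show "AE x in M. (\<lambda>N. indicator (P N) x * g x) \<longlonglongrightarrow> indicator E x * g x"
    proof (rule AE_I2)
      fix x assume x: "x \<in> space M"
      show "(\<lambda>N. indicator (P N) x * g x) \<longlonglongrightarrow> indicator E x * g x"
      proof (cases "x \<in> E")
        case True
        then obtain n where n: "0 < S n x" unfolding E_eq by auto
        have "eventually (\<lambda>N. indicator (P N) x * g x = indicator E x * g x) sequentially"
          unfolding eventually_sequentially
        proof (intro exI allI impI)
          fix N assume "n \<le> N"
          then have "0 < Mx N x" using Mx_ge[of n N x] n by simp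
          then show "indicator (P N) x * g x = indicator E x * g x" using True x by (simp add: P_def)
        qed
        then show ?thesis by (rule tendsto_eventually)
      next
        case False
        have "indicator (P N) x * g x = indicator E x * g x" for N
        proof -
          obtain n where "n \<le> N" "Mx N x = S n x" using Mx_in[of N x] by auto
          then have "\<not> 0 < Mx N x" using False x unfolding E_eq by auto
          then show ?thesis using False by (simp add: P_def)
        qed
        then have "(\<lambda>N. indicator (P N) x * g x) = (\<lambda>N. indicator E x * g x)" by (rule ext)
        then show ?thesis by (simp only:) (rule tendsto_const)
      qed
    qed
    show "AE x in M. norm (indicator (P N) x * g x) \<le> B" for N
      by (auto intro!: AE_I2 simp: indicator_def gb abs_mult Bnn)
  qed auto
  show ?thesis unfolding E_def[symmetric]
    by (rule LIMSEQ_le_const[OF lim]) (use IN in auto)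
qed




definition lowfreq :: "(nat \<Rightarrow> real) \<Rightarrow> real \<Rightarrow> bool" where
  "lowfreq u a \<longleftrightarrow> (\<exists>r::rat. of_rat r < a \<and> (\<forall>N. \<exists>n\<ge>N. u n < of_rat r))"

lemma rat_between: fixes x y :: real assumes "x < y" obtains r :: rat where "x < of_rat r" "of_rat r < y"
  using Rats_dense_in_real[OF assms] by (auto elim!: Rats_cases)

lemma nonconv_lowfreq:
  fixes u :: "nat \<Rightarrow> real"
  assumes bd: "\<And>n. \<bar>u n\<bar> \<le> C" and nc: "\<not> convergent u"
  shows "\<exists>a b :: rat. a < b \<and> lowfreq u (of_rat a) \<and> lowfreq (\<lambda>n. - u n) (- of_rat b)"
proof -
  define L where "L = liminf (\<lambda>n. ereal (u n))"
  define U where "U = limsup (\<lambda>n. ereal (u n))"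
  have b1: "-C \<le> u n" for n using bd[of n] by linarith
  have ev1: "eventually (\<lambda>n. ereal (-C) \<le> ereal (u n)) sequentially" using b1
    by (auto intro!: always_eventually)
  have ev2: "eventually (\<lambda>n. ereal (u n) \<le> ereal C) sequentially" using bd
    by (auto intro!: always_eventually simp: abs_le_iff)
  have L1: "ereal (-C) \<le> L" unfolding L_def by (rule Liminf_bounded[OF ev1])
  have U1: "U \<le> ereal C" unfolding U_def by (rule Limsup_bounded[OF ev2])
  have LU: "L \<le> U" unfolding L_def U_def by (rule Liminf_le_Limsup) simp
  obtain l where l: "L = ereal l" using L1 LU U1 by (cases L) auto
  obtain v where v: "U = ereal v" using L1 LU U1 by (cases U) auto
  have "l \<noteq> v"
  proof
    assume "l = v"
    then have "((\<lambda>n. ereal (u n)) \<longlongrightarrow> ereal l) sequentially"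
      using l v unfolding L_def U_def by (intro Liminf_eq_Limsup) auto
    then have "u \<longlonglongrightarrow> l" by simp
    then show False using nc by (auto simp: convergent_def)
  qed
  then have lv: "l < v" using LU l v by simp
  have lm: "l < (l + v) / 2" "(l + v) / 2 < v" using lv by simp_all
  obtain r where r: "l < of_rat r" "of_rat r < (l + v) / 2" using lm(1) by (rule rat_between)
  obtain a where a: "(of_rat r::real) < of_rat a" "of_rat a < (l + v) / 2" using r(2) by (rule rat_between)
  obtain s where s: "(l+v)/2 < of_rat s" "of_rat s < v" using lm(2) by (rule rat_between)
  obtain b where b: "(l+v)/2 < of_rat b" "of_rat b < (of_rat s::real)" using s(1) by (rule rat_between)
  have "(of_rat a::real) < of_rat b" using a(2) b(1) by linarith
  then have "a < b" by (simp add: of_rat_less)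
  have fr1: "\<forall>N. \<exists>n\<ge>N. u n < of_rat r"
  proof -
    have "\<not> ereal (of_rat r) \<le> L" using r l by simp
    then obtain y where y: "y < ereal (of_rat r)" "\<not> eventually (\<lambda>n. y < ereal (u n)) sequentially"
      unfolding L_def le_Liminf_iff by auto
    then have "frequently (\<lambda>n. ereal (u n) \<le> y) sequentially"
      by (simp add: not_eventually not_less)
    moreover have "u n < of_rat r" if "ereal (u n) \<le> y" for n
    proof -
      have "ereal (u n) < ereal (of_rat r)" using that y(1) by (rule le_less_trans)
      then show ?thesis by simp
    qed
    ultimately have "frequently (\<lambda>n. u n < of_rat r) sequentially"
      by (auto elim: frequently_elim1)
    then show ?thesis by (simp add: frequently_sequentially)
  qed
  have fr2: "\<forall>N. \<exists>n\<ge>N. of_rat s < u n"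
  proof -
    have "\<not> U \<le> ereal (of_rat s)" using s v by simp
    then obtain y where y: "y > ereal (of_rat s)" "\<not> eventually (\<lambda>n. y > ereal (u n)) sequentially"
      unfolding U_def Limsup_le_iff by auto
    then have "frequently (\<lambda>n. y \<le> ereal (u n)) sequentially"
      by (simp add: not_eventually not_less)
    moreover have "of_rat s < u n" if "y \<le> ereal (u n)" for n
    proof -
      have "ereal (of_rat s) < ereal (u n)" using y(1) that by (rule less_le_trans)
      then show ?thesis by simp
    qed
    ultimately have "frequently (\<lambda>n. of_rat s < u n) sequentially"
      by (auto elim: frequently_elim1)
    then show ?thesis by (simp add: frequently_sequentially)
  qed
  have "lowfreq u (of_rat a)" unfolding lowfreq_def using fr1 a by (intro exI[of _ r]) auto
  moreover have "lowfreq (\<lambda>n. - u n) (- of_rat b)" unfolding lowfreq_def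
    using fr2 b by (intro exI[of _ "-s"]) (auto simp: of_rat_minus)
  ultimately show ?thesis using \<open>a < b\<close> by blast
qed

lemma lowfreq_shift1:
  assumes lim: "(\<lambda>n. u (Suc n) - v n) \<longlonglongrightarrow> 0" and lv: "lowfreq v a"
  shows "lowfreq u a"
proof -
  obtain r where r: "of_rat r < a" "\<forall>N. \<exists>n\<ge>N. v n < of_rat r" using lv unfolding lowfreq_def by auto
  obtain r' where r': "(of_rat r::real) < of_rat r'" "of_rat r' < a" using r(1) by (auto intro: rat_between)
  define d :: real where "d = of_rat r' - of_rat r"
  have d: "d > 0" using r' by (simp add: d_def)
  obtain N0 where N0: "\<And>n. n \<ge> N0 \<Longrightarrow> \<bar>u (Suc n) - v n\<bar> < d"
    using lim d unfolding LIMSEQ_def dist_real_def by auto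
  have "\<forall>N. \<exists>n\<ge>N. u n < of_rat r'"
  proof
    fix N
    obtain n where n: "n \<ge> max N N0" "v n < of_rat r" using r(2) by blast
    have "u (Suc n) < of_rat r'" using N0[of n] n unfolding d_def by auto
    then show "\<exists>n\<ge>N. u n < of_rat r'" using n by (intro exI[of _ "Suc n"]) auto
  qed
  then show ?thesis unfolding lowfreq_def using r' by blast
qed

lemma lowfreq_shift2:
  assumes lim: "(\<lambda>n. u (Suc n) - v n) \<longlonglongrightarrow> 0" and lu: "lowfreq u a"
  shows "lowfreq v a"
proof -
  obtain r where r: "of_rat r < a" "\<forall>N. \<exists>n\<ge>N. u n < of_rat r" using lu unfolding lowfreq_def by auto
  obtain r' where r': "(of_rat r::real) < of_rat r'" "of_rat r' < a" using r(1) by (auto intro: rat_between)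
  define d :: real where "d = of_rat r' - of_rat r"
  have d: "d > 0" using r' by (simp add: d_def)
  obtain N0 where N0: "\<And>n. n \<ge> N0 \<Longrightarrow> \<bar>u (Suc n) - v n\<bar> < d"
    using lim d unfolding LIMSEQ_def dist_real_def by auto
  have "\<forall>N. \<exists>n\<ge>N. v n < of_rat r'"
  proof
    fix N
    obtain n where n: "n \<ge> Suc (max N N0)" "u n < of_rat r" using r(2) by blast
    then obtain m where m: "n = Suc m" by (cases n) auto
    have "v m < of_rat r'" using N0[of m] n m unfolding d_def by auto
    then show "\<exists>n\<ge>N. v n < of_rat r'" using n m by (intro exI[of _ m]) auto
  qed
  then show ?thesis unfolding lowfreq_def using r' by blast
qed




lemma birkhoff_bounded:
  fixes f :: "'a \<Rightarrow> real"
  assumes P: "prob_space M" and Tm: "T \<in> measurable M M" and Tp: "distr M M T = M"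
    and fm[measurable]: "f \<in> borel_measurable M" and fb: "\<And>x. x \<in> space M \<Longrightarrow> \<bar>f x\<bar> \<le> B"
  shows "AE x in M. convergent (\<lambda>n. (1 / real n) * (\<Sum>k<n. f ((T^^k) x)))"
proof -
  interpret prob_space M by fact
  have Tkm[measurable]: "\<And>k. (T^^k) \<in> measurable M M" using measurable_funpow_self[OF Tm] .
  have Tm'[measurable]: "T \<in> measurable M M" by fact
  have Tk_space: "(T^^k) x \<in> space M" if "x \<in> space M" for k x
    using measurable_space[OF Tkm that] .
  have T_space: "T x \<in> space M" if "x \<in> space M" for x
    using measurable_space[OF Tm that] .
  define A where "A n x = (1 / real n) * (\<Sum>k<n. f ((T^^k) x))" for n x
  have Am[measurable]: "A n \<in> borel_measurable M" for n unfolding A_def by measurable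
  have Bnn: "0 \<le> B" if "x \<in> space M" for x using fb[OF that] by linarith
  have B0: "0 \<le> B" using Bnn not_empty by blast
  have Sb: "\<bar>\<Sum>k<n. f ((T^^k) x)\<bar> \<le> real n * B" if "x \<in> space M" for n x
  proof -
    have "\<bar>\<Sum>k<n. f ((T^^k) x)\<bar> \<le> (\<Sum>k<n. \<bar>f ((T^^k) x)\<bar>)" by (rule sum_abs)
    also have "\<dots> \<le> (\<Sum>k<n. B)" by (intro sum_mono fb Tk_space that)
    finally show ?thesis by simp
  qed
  have Ab: "\<bar>A n x\<bar> \<le> B" if "x \<in> space M" for n x
  proof (cases "n = 0")
    case True then show ?thesis using Bnn[OF that] by (simp add: A_def)
  next
    case False
    have "\<bar>A n x\<bar> = \<bar>\<Sum>k<n. f ((T^^k) x)\<bar> / real n" by (simp add: A_def)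
    also have "\<dots> \<le> real n * B / real n" by (intro divide_right_mono Sb that) simp
    also have "\<dots> = B" using False by simp
    finally show ?thesis .
  qed
  have Sum_A: "\<And>n x. (\<Sum>k<n. f ((T^^k) x)) = real n * A n x"
    subgoal for n x by (cases "n = 0") (simp_all add: A_def)
    done
  have shift: "(\<lambda>n. A (Suc n) x - A n (T x)) \<longlonglongrightarrow> 0" if x: "x \<in> space M" for x
  proof (rule Lim_null_comparison)
    have "norm (A (Suc n) x - A n (T x)) \<le> 2 * B * (1 / real (Suc n))" for n
    proof -
      have e1: "(\<Sum>k<Suc n. f ((T^^k) x)) = f x + real n * A n (T x)"
        by (subst birk_sum_shift) (simp only: Sum_A)
      have "A (Suc n) x = (f x + real n * A n (T x)) / real (Suc n)"
      proof -
        have h: "real (Suc n) * A (Suc n) x = f x + real n * A n (T x)"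
          using Sum_A[of x "Suc n"] e1 by linarith
        show ?thesis by (subst eq_divide_eq) (use h in \<open>simp add: mult.commute\<close>)
      qed
      then have "A (Suc n) x - A n (T x) = (f x + real n * A n (T x)) / real (Suc n) - A n (T x)"
        by simp
      also have "\<dots> = (f x - A n (T x)) / real (Suc n)"
        by (simp add: divide_simps) (simp add: algebra_simps)
      finally have "A (Suc n) x - A n (T x) = (f x - A n (T x)) / real (Suc n)" .
      then have "norm (A (Suc n) x - A n (T x)) = \<bar>f x - A n (T x)\<bar> / real (Suc n)" by simp
      also have "\<dots> \<le> (2 * B) / real (Suc n)"
        using fb[OF x] Ab[OF T_space[OF x], of n] by (intro divide_right_mono) auto
      finally show ?thesis by simp
    qed
    then show "eventually (\<lambda>n. norm (A (Suc n) x - A n (T x)) \<le> 2 * B * (1 / real (Suc n))) sequentially"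
      by (intro always_eventually) auto
    show "(\<lambda>n. 2 * B * (1 / real (Suc n))) \<longlonglongrightarrow> 0"
      by (intro tendsto_mult_right_zero LIMSEQ_Suc[OF lim_1_over_n])
  qed
  have shift': "(\<lambda>n. - A (Suc n) x - - A n (T x)) \<longlonglongrightarrow> 0" if x: "x \<in> space M" for x
    using tendsto_minus[OF shift[OF x]] by simp
  define E where "E a b = {x \<in> space M. lowfreq (\<lambda>n. A n x) a \<and> lowfreq (\<lambda>n. - A n x) (-b)}" for a b
  have Em[measurable]: "E a b \<in> sets M" for a b unfolding E_def lowfreq_def by measurable
  have E_inv: "T x \<in> E a b \<longleftrightarrow> x \<in> E a b" if x: "x \<in> space M" for x a b
    using lowfreq_shift1[OF shift[OF x]] lowfreq_shift2[OF shift[OF x]]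
      lowfreq_shift1[OF shift'[OF x]] lowfreq_shift2[OF shift'[OF x]] x T_space[OF x]
    unfolding E_def by blast
  have E_invk: "(T^^k) x \<in> E a b \<longleftrightarrow> x \<in> E a b" if x: "x \<in> space M" for x a b k
  proof (induction k)
    case (Suc k)
    have "(T^^Suc k) x = T ((T^^k) x)" by simp
    then show ?case using E_inv[OF Tk_space[OF x, of k]] Suc by simp
  qed simp
  have ind_sum: "(\<Sum>k<n. indicator (E a b) ((T^^k) x) * h ((T^^k) x)) =
      indicator (E a b) x * (\<Sum>k<n. h ((T^^k) x))" if x: "x \<in> space M" for x a b n and h :: "'a \<Rightarrow> real"
    using E_invk[OF x] by (simp add: sum_distrib_left indicator_def)
  have E_null: "measure M (E a b) = 0" if ab: "a < b" for a b
  proof -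
    define g1 where "g1 x = indicator (E a b) x * (f x - b)" for x
    define g2 where "g2 x = indicator (E a b) x * (a - f x)" for x
    have g1m[measurable]: "g1 \<in> borel_measurable M" unfolding g1_def by measurable
    have g2m[measurable]: "g2 \<in> borel_measurable M" unfolding g2_def by measurable
    have g1b: "\<bar>g1 x\<bar> \<le> B + \<bar>b\<bar>" if "x \<in> space M" for x
      using fb[OF that] Bnn[OF that] by (auto simp: g1_def indicator_def)
    have g2b: "\<bar>g2 x\<bar> \<le> B + \<bar>a\<bar>" if "x \<in> space M" for x
      using fb[OF that] Bnn[OF that] by (auto simp: g2_def indicator_def)
    have set1: "{x\<in>space M. \<exists>n. 0 < (\<Sum>k<n. g1 ((T^^k) x))} = E a b"
    proof (intro set_eqI iffI)
      fix x assume "x \<in> {x\<in>space M. \<exists>n. 0 < (\<Sum>k<n. g1 ((T^^k) x))}"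
      then obtain n where x: "x \<in> space M" and n: "0 < (\<Sum>k<n. g1 ((T^^k) x))" by auto
      from n have "0 < indicator (E a b) x * (\<Sum>k<n. f ((T^^k) x) - b)"
        using ind_sum[OF x, of a b "\<lambda>y. f y - b" n] by (simp add: g1_def)
      then show "x \<in> E a b" by (cases "x \<in> E a b") auto
    next
      fix x assume xE: "x \<in> E a b"
      then have x: "x \<in> space M" unfolding E_def by auto
      from xE obtain r :: rat where r: "of_rat r < - b" "\<forall>N. \<exists>n\<ge>N. - A n x < of_rat r"
        unfolding E_def lowfreq_def by auto
      then obtain n where n: "n \<ge> 1" "- A n x < of_rat r" by blast
      have "real n * b < real n * A n x" using n r(1) by (intro mult_strict_left_mono) auto
      then have "0 < (\<Sum>k<n. f ((T^^k) x) - b)" by (simp add: sum_subtractf Sum_A)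
      then have "0 < (\<Sum>k<n. g1 ((T^^k) x))" using ind_sum[OF x, of a b "\<lambda>y. f y - b" n] xE by (simp add: g1_def)
      then show "x \<in> {x\<in>space M. \<exists>n. 0 < (\<Sum>k<n. g1 ((T^^k) x))}" using x by auto
    qed
    have set2: "{x\<in>space M. \<exists>n. 0 < (\<Sum>k<n. g2 ((T^^k) x))} = E a b"
    proof (intro set_eqI iffI)
      fix x assume "x \<in> {x\<in>space M. \<exists>n. 0 < (\<Sum>k<n. g2 ((T^^k) x))}"
      then obtain n where x: "x \<in> space M" and n: "0 < (\<Sum>k<n. g2 ((T^^k) x))" by auto
      from n have "0 < indicator (E a b) x * (\<Sum>k<n. a - f ((T^^k) x))"
        using ind_sum[OF x, of a b "\<lambda>y. a - f y" n] by (simp add: g2_def)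
      then show "x \<in> E a b" by (cases "x \<in> E a b") auto
    next
      fix x assume xE: "x \<in> E a b"
      then have x: "x \<in> space M" unfolding E_def by auto
      from xE obtain r :: rat where r: "of_rat r < a" "\<forall>N. \<exists>n\<ge>N. A n x < of_rat r"
        unfolding E_def lowfreq_def by auto
      then obtain n where n: "n \<ge> 1" "A n x < of_rat r" by blast
      have "real n * A n x < real n * a" using n r(1) by (intro mult_strict_left_mono) auto
      then have "0 < (\<Sum>k<n. a - f ((T^^k) x))" by (simp add: sum_subtractf Sum_A)
      then have "0 < (\<Sum>k<n. g2 ((T^^k) x))" using ind_sum[OF x, of a b "\<lambda>y. a - f y" n] xE by (simp add: g2_def)
      then show "x \<in> {x\<in>space M. \<exists>n. 0 < (\<Sum>k<n. g2 ((T^^k) x))}" using x by auto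
    qed
    have I1: "0 \<le> (\<integral>x. indicator (E a b) x * g1 x \<partial>M)"
      using maximal_ergodic[OF P Tm Tp g1m g1b] unfolding set1 .
    have I2: "0 \<le> (\<integral>x. indicator (E a b) x * g2 x \<partial>M)"
      using maximal_ergodic[OF P Tm Tp g2m g2b] unfolding set2 .
    have i1: "integrable M (\<lambda>x. indicator (E a b) x * g1 x)"
      by (rule integrable_const_bound[where B="B + \<bar>b\<bar>"])
         (auto intro!: AE_I2 simp: abs_mult indicator_def g1b B0)
    have i2: "integrable M (\<lambda>x. indicator (E a b) x * g2 x)"
      by (rule integrable_const_bound[where B="B + \<bar>a\<bar>"])
         (auto intro!: AE_I2 simp: abs_mult indicator_def g2b B0)
    have "(\<integral>x. indicator (E a b) x * g1 x \<partial>M) + (\<integral>x. indicator (E a b) x * g2 x \<partial>M)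
        = (\<integral>x. indicator (E a b) x * g1 x + indicator (E a b) x * g2 x \<partial>M)"
      using i1 i2 by simp
    also have "\<dots> = (\<integral>x. (a - b) * indicator (E a b) x \<partial>M)"
      by (intro Bochner_Integration.integral_cong) (auto simp: g1_def g2_def indicator_def)
    also have "\<dots> = (a - b) * measure M (E a b)" by simp
    finally have "0 \<le> (a - b) * measure M (E a b)" using I1 I2 by linarith
    then have "measure M (E a b) \<le> 0"
    proof (rule contrapos_pp)
      assume "\<not> measure M (E a b) \<le> 0"
      then have "(a - b) * measure M (E a b) < 0" using ab by (intro mult_neg_pos) auto
      then show "\<not> 0 \<le> (a - b) * measure M (E a b)" by linarith
    qed
    then show ?thesis using measure_nonneg[of M "E a b"] by linarith
  qed
  have "AE x in M. \<forall>p::rat \<times> rat. fst p < snd p \<longrightarrow> x \<notin> E (of_rat (fst p)) (of_rat (snd p))"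
  proof (subst AE_all_countable, intro allI)
    fix p :: "rat \<times> rat"
    show "AE x in M. fst p < snd p \<longrightarrow> x \<notin> E (of_rat (fst p)) (of_rat (snd p))"
    proof (cases "fst p < snd p")
      case True
      have "E (of_rat (fst p)) (of_rat (snd p)) \<in> null_sets M"
        using E_null[of "of_rat (fst p)" "of_rat (snd p)"] True
        by (auto simp: emeasure_eq_measure of_rat_less intro!: null_setsI)
      from AE_not_in[OF this] show ?thesis by simp
    qed simp
  qed
  then show ?thesis
  proof (rule AE_mp, intro AE_I2 impI)
    fix x assume x: "x \<in> space M" and H: "\<forall>p::rat \<times> rat. fst p < snd p \<longrightarrow> x \<notin> E (of_rat (fst p)) (of_rat (snd p))"
    show "convergent (\<lambda>n. (1 / real n) * (\<Sum>k<n. f ((T^^k) x)))"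
    proof (rule ccontr)
      assume nc: "\<not> ?thesis"
      have "\<not> convergent (\<lambda>n. A n x)" using nc by (simp add: A_def)
      from nonconv_lowfreq[OF Ab[OF x] this] obtain a b :: rat where
        "a < b" "lowfreq (\<lambda>n. A n x) (of_rat a)" "lowfreq (\<lambda>n. - A n x) (- of_rat b)" by blast
      then show False using H[rule_format, of "(a, b)"] x by (auto simp: E_def)
    qed
  qed
qed




lemma conv_diff0:
  fixes u v :: "nat \<Rightarrow> real"
  assumes d: "(\<lambda>n. u n - v n) \<longlonglongrightarrow> 0"
  shows "convergent u \<longleftrightarrow> convergent v" and "convergent v \<Longrightarrow> lim u = lim v"
proof -
  have 1: "u \<longlonglongrightarrow> l" if "v \<longlonglongrightarrow> l" for l
    using tendsto_add[OF d that] by simp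
  have 2: "v \<longlonglongrightarrow> l" if "u \<longlonglongrightarrow> l" for l
    using tendsto_diff[OF that d] by simp
  show "convergent u \<longleftrightarrow> convergent v" using 1 2 unfolding convergent_def by blast
  show "lim u = lim v" if "convergent v"
  proof -
    from that obtain l where l: "v \<longlonglongrightarrow> l" unfolding convergent_def by blast
    then show ?thesis using 1[OF l] by (simp add: limI)
  qed
qed

lemma pred_convergent_real[measurable (raw)]:
  fixes f :: "nat \<Rightarrow> 'a \<Rightarrow> real"
  assumes [measurable]: "\<And>i. f i \<in> borel_measurable M"
  shows "Measurable.pred M (\<lambda>x. convergent (\<lambda>i. f i x))"
proof -
  have "{x\<in>space M. convergent (\<lambda>i. f i x)} = {x\<in>space M. Cauchy (\<lambda>i. f i x)}"
    by (simp add: Cauchy_convergent_iff)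
  then show ?thesis unfolding Measurable.pred_def using sets_Collect_Cauchy[of f M] by simp
qed

lemma flow_iter:
  assumes "continuous_flow \<Phi>"
  shows "\<Phi> (real q * dt) = (\<Phi> dt ^^ q)"
proof (induction q)
  case 0
  then show ?case using assms by (auto simp: continuous_flow_def)
next
  case (Suc q)
  have "\<Phi> (real (Suc q) * dt) x = \<Phi> dt (\<Phi> (real q * dt) x)" for x
  proof -
    have "real (Suc q) * dt = dt + real q * dt" by (simp add: algebra_simps)
    then show ?thesis using assms by (simp add: continuous_flow_def)
  qed
  then show ?case using Suc by auto
qed




theorem mainTheorem10:
  fixes \<mu> :: "'a::metric_space measure"
    and \<Phi> :: "real \<Rightarrow> 'a \<Rightarrow> 'a"
    and F :: "'a \<Rightarrow> real^'d"
    and X :: "'a set"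
    and \<Delta>t \<epsilon> :: real
  assumes manifold: "topological_manifold (UNIV :: 'a set) TYPE('e::euclidean_space)"
    and flow: "continuous_flow \<Phi>"
    and borel: "sets \<mu> = sets borel"
    and prob: "prob_space \<mu>"
    and erg: "ergodic_flow \<mu> \<Phi>"
    and X_def: "X = measure_support \<mu>"
    and X_compact: "compact X"
    and X_full: "emeasure \<mu> X = 1"
    and F_cont: "continuous_on UNIV F"
    and dt_pos: "\<Delta>t > 0"
    and erg_dt: "ergodic_map \<mu> (\<Phi> \<Delta>t)"
    and eps_pos: "\<epsilon> > 0"
  shows "(\<exists>c>0. AE x in \<mu>. rho \<mu> X \<Phi> F \<Delta>t \<epsilon> x = c) \<and>
         (continuity_assumption \<mu> \<Phi> F X \<longrightarrow>
            (\<exists>g. continuous_on X g \<and> (AE x in \<mu>. rho \<mu> X \<Phi> F \<Delta>t \<epsilon> x = g x)) \<and>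
            (\<exists>h. continuous_on X h \<and> (AE x in \<mu>. 1 / rho \<mu> X \<Phi> F \<Delta>t \<epsilon> x = h x)))"
proof -
  interpret prob_space \<mu> by (rule prob)
  have space_eq: "space \<mu> = UNIV" using sets_eq_imp_space_eq[OF borel] by simp
  have Phi_cont: "continuous_on UNIV (\<Phi> t)" for t
  proof -
    have c: "continuous_on UNIV (\<lambda>p. \<Phi> (fst p) (snd p))" using flow by (simp add: continuous_flow_def)
    have "continuous_on UNIV ((\<lambda>p. \<Phi> (fst p) (snd p)) \<circ> (\<lambda>x. (t, x)))"
      by (intro continuous_on_compose continuous_intros continuous_on_subset[OF c]) auto
    then show ?thesis by (simp add: comp_def)
  qed
  have Phi_meas[measurable]: "\<Phi> t \<in> measurable \<mu> \<mu>" for t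
    by (subst measurable_cong_sets[OF borel borel]) (rule borel_measurable_continuous_onI[OF Phi_cont[of t]])
  have Fm[measurable]: "F \<in> borel_measurable \<mu>"
    by (subst measurable_cong_sets[OF borel refl]) (rule borel_measurable_continuous_onI[OF F_cont])
  have X_closed: "closed X" using X_compact by (rule compact_imp_closed)
  have Xm[measurable]: "X \<in> sets \<mu>" using borel X_closed by simp
  define T where "T = \<Phi> \<Delta>t"
  have Tm[measurable]: "T \<in> measurable \<mu> \<mu>" unfolding T_def by simp
  have mp: "measure_preserving_map \<mu> (\<Phi> t)" for t using erg by (simp add: ergodic_flow_def)
  have Tp: "distr \<mu> \<mu> T = \<mu>"
  proof (rule measure_eqI)
    show "sets (distr \<mu> \<mu> T) = sets \<mu>" by simp
    fix A assume "A \<in> sets (distr \<mu> \<mu> T)"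
    then have A: "A \<in> sets \<mu>" by simp
    show "emeasure (distr \<mu> \<mu> T) A = emeasure \<mu> A"
      using A mp[of \<Delta>t] by (simp add: emeasure_distr measure_preserving_map_def T_def)
  qed
  have fiter: "\<Phi> (real q * \<Delta>t) = (T ^^ q)" for q unfolding T_def by (rule flow_iter[OF flow])
  have X_fwd: "\<Phi> t x \<in> X" if x: "x \<in> X" for t x
  proof -
    have "0 < emeasure \<mu> U" if U: "open U" "\<Phi> t x \<in> U" for U
    proof -
      have "open (\<Phi> t -` U)" using U(1) Phi_cont by (rule open_vimage)
      moreover have "x \<in> \<Phi> t -` U" using U by simp
      ultimately have "0 < emeasure \<mu> (\<Phi> t -` U)" using x unfolding X_def measure_support_def by blast
      moreover have "emeasure \<mu> (\<Phi> t -` U \<inter> space \<mu>) = emeasure \<mu> U"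
        using mp[of t] U(1) borel unfolding measure_preserving_map_def by auto
      ultimately show ?thesis using space_eq by simp
    qed
    then show ?thesis unfolding X_def measure_support_def by blast
  qed
  have T_X: "T x \<in> X \<longleftrightarrow> x \<in> X" for x
  proof
    assume "T x \<in> X"
    then have "\<Phi> (-\<Delta>t) (T x) \<in> X" by (rule X_fwd)
    moreover have "\<Phi> (-\<Delta>t) (T x) = x" using flow unfolding T_def continuous_flow_def
      by (metis add.left_inverse)
    ultimately show "x \<in> X" by simp
  qed (simp add: T_def X_fwd)
  have Tk_X: "(T ^^ k) x \<in> X" if "x \<in> X" for k x
    using that by (induction k) (auto simp: T_X)
  have "bounded (F ` X)"
    using compact_continuous_image[OF continuous_on_subset[OF F_cont] X_compact] compact_imp_bounded by auto
  then obtain C where C: "\<And>x. x \<in> X \<Longrightarrow> norm (F x) \<le> C" unfolding bounded_iff by auto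
  define D where "D = (2 * C)^2"
  define a where "a x y q = (norm (F ((T^^q) x) - F ((T^^q) y)))^2" for x y q
  have a_nn: "0 \<le> a x y q" for x y q unfolding a_def by simp
  have a_bd: "a x y q \<le> D" if "x \<in> X" "y \<in> X" for x y q
  proof -
    have "norm (F ((T^^q) x) - F ((T^^q) y)) \<le> norm (F ((T^^q) x)) + norm (F ((T^^q) y))"
      by (rule norm_triangle_ineq4)
    also have "\<dots> \<le> 2 * C" using C[OF Tk_X[OF that(1), of q]] C[OF Tk_X[OF that(2), of q]] by simp
    finally show ?thesis unfolding a_def D_def by (intro power_mono) auto
  qed
  have dQ2_eq: "dQ2 \<Phi> F \<Delta>t Q x y = (1 / real Q) * (\<Sum>q<Q. a x y q)" for Q x y
    by (simp add: dQ2_def fiter a_def)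
  have dQ2_nn: "0 \<le> dQ2 \<Phi> F \<Delta>t Q x y" for Q x y
    unfolding dQ2_eq using a_nn by (simp add: sum_nonneg)
  define k where "k = k_inf \<Phi> F \<Delta>t \<epsilon>"
  have k_range: "0 \<le> k x y \<and> k x y \<le> 1" for x y
  proof (cases "convergent (\<lambda>Q. dQ2 \<Phi> F \<Delta>t Q x y)")
    case True
    then have "(\<lambda>Q. dQ2 \<Phi> F \<Delta>t Q x y) \<longlonglongrightarrow> lim (\<lambda>Q. dQ2 \<Phi> F \<Delta>t Q x y)"
      by (simp add: convergent_LIMSEQ_iff)
    then have "0 \<le> lim (\<lambda>Q. dQ2 \<Phi> F \<Delta>t Q x y)"
      by (rule LIMSEQ_le_const) (use dQ2_nn in auto)
    then show ?thesis using True eps_pos by (simp add: k_def k_inf_def)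
  next
    case False
    then show ?thesis by (simp add: k_def k_inf_def)
  qed
  have k_pos: "0 < k x y" if "convergent (\<lambda>Q. dQ2 \<Phi> F \<Delta>t Q x y)" for x y
    using that by (simp add: k_def k_inf_def)
  have k_inv: "k (T x) (T y) = k x y" if xy: "x \<in> X" "y \<in> X" for x y
  proof -
    have aT: "a (T x) (T y) q = a x y (Suc q)" for q
      by (simp add: a_def funpow_Suc_right del: funpow.simps)
    have diff: "dQ2 \<Phi> F \<Delta>t Q (T x) (T y) - dQ2 \<Phi> F \<Delta>t Q x y = (1 / real Q) * (a x y Q - a x y 0)" for Q
    proof -
      have "(\<Sum>q<Q. a (T x) (T y) q) = (\<Sum>q<Q. a x y q) + a x y Q - a x y 0"
      proof -
        have "(\<Sum>q<Suc Q. a x y q) = a x y 0 + (\<Sum>q<Q. a x y (Suc q))" by (rule sum.lessThan_Suc_shift)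
        then show ?thesis by (simp add: aT)
      qed
      then have e: "(\<Sum>q<Q. a (T x) (T y) q) - (\<Sum>q<Q. a x y q) = a x y Q - a x y 0" by linarith
      show ?thesis by (simp only: dQ2_eq right_diff_distrib[symmetric] e)
    qed
    have lim0: "(\<lambda>Q. dQ2 \<Phi> F \<Delta>t Q (T x) (T y) - dQ2 \<Phi> F \<Delta>t Q x y) \<longlonglongrightarrow> 0"
    proof (rule Lim_null_comparison)
      show "eventually (\<lambda>Q. norm (dQ2 \<Phi> F \<Delta>t Q (T x) (T y) - dQ2 \<Phi> F \<Delta>t Q x y) \<le> (2 * D) * (1 / real Q)) sequentially"
      proof (intro always_eventually allI)
        fix Q
        have "\<bar>a x y Q - a x y 0\<bar> \<le> 2 * D" using a_bd[OF xy] a_nn by (smt (verit))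
        then show "norm (dQ2 \<Phi> F \<Delta>t Q (T x) (T y) - dQ2 \<Phi> F \<Delta>t Q x y) \<le> (2 * D) * (1 / real Q)"
          unfolding diff by (simp add: abs_mult divide_right_mono)
      qed
      show "(\<lambda>Q. (2 * D) * (1 / real Q)) \<longlonglongrightarrow> 0"
        by (intro tendsto_mult_right_zero lim_1_over_n)
    qed
    show ?thesis using conv_diff0[OF lim0] unfolding k_def k_inf_def by simp
  qed
  have pps: "prob_space (\<mu> \<Otimes>\<^sub>M \<mu>)" by (rule prob_space_pair[OF prob prob])
  interpret PP: pair_sigma_finite \<mu> \<mu> by unfold_locales
  define TT where "TT p = (T (fst p), T (snd p))" for p
  have TTm[measurable]: "TT \<in> measurable (\<mu> \<Otimes>\<^sub>M \<mu>) (\<mu> \<Otimes>\<^sub>M \<mu>)" unfolding TT_def by measurable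
  have TTp: "distr (\<mu> \<Otimes>\<^sub>M \<mu>) (\<mu> \<Otimes>\<^sub>M \<mu>) TT = \<mu> \<Otimes>\<^sub>M \<mu>"
  proof -
    have sf: "sigma_finite_measure (distr \<mu> \<mu> T)" unfolding Tp by unfold_locales
    have "distr \<mu> \<mu> T \<Otimes>\<^sub>M distr \<mu> \<mu> T = distr (\<mu> \<Otimes>\<^sub>M \<mu>) (\<mu> \<Otimes>\<^sub>M \<mu>) (\<lambda>(x, y). (T x, T y))"
      by (rule pair_measure_distr[OF Tm Tm sf])
    moreover have "(\<lambda>(x, y). (T x, T y)) = TT" by (auto simp: TT_def)
    ultimately show ?thesis using Tp by simp
  qed
  have TTk: "(TT ^^ k) p = ((T^^k) (fst p), (T^^k) (snd p))" for k p
    by (induction k) (auto simp: TT_def)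
  define f where "f p = indicator (X \<times> X) p * a (fst p) (snd p) 0" for p
  have XXm[measurable]: "X \<times> X \<in> sets (\<mu> \<Otimes>\<^sub>M \<mu>)" by (rule pair_measureI) auto
  have f_eq: "f = (\<lambda>p. indicator (X \<times> X) p * (norm (F (fst p) - F (snd p)))^2)"
    by (auto simp: f_def a_def)
  have fm[measurable]: "f \<in> borel_measurable (\<mu> \<Otimes>\<^sub>M \<mu>)" unfolding f_eq by measurable
  have fb: "\<bar>f p\<bar> \<le> D" for p
    using a_bd[of "fst p" "snd p" 0] a_nn[of "fst p" "snd p" 0] unfolding f_def
    by (cases "p \<in> X \<times> X") (auto simp: mem_Times_iff D_def)
  have birk: "AE p in \<mu> \<Otimes>\<^sub>M \<mu>. convergent (\<lambda>n. (1 / real n) * (\<Sum>k<n. f ((TT^^k) p)))"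
    by (rule birkhoff_bounded[OF pps TTm TTp fm fb])
  have fTT: "f ((TT^^k) (x, y)) = a x y k" if "x \<in> X" "y \<in> X" for x y k
    using Tk_X[OF that(1), of k] Tk_X[OF that(2), of k]
    by (simp add: f_def TTk a_def funpow_add[symmetric] del: funpow.simps)
  have conv_ae: "AE p in \<mu> \<Otimes>\<^sub>M \<mu>. p \<in> X \<times> X \<longrightarrow> convergent (\<lambda>Q. dQ2 \<Phi> F \<Delta>t Q (fst p) (snd p))"
    using birk
  proof (rule AE_mp, intro AE_I2 impI)
    fix p assume c: "convergent (\<lambda>n. (1 / real n) * (\<Sum>k<n. f ((TT^^k) p)))" and p: "p \<in> X \<times> X"
    obtain x y where xy: "p = (x, y)" "x \<in> X" "y \<in> X" using p by auto
    have "(\<lambda>n. (1 / real n) * (\<Sum>k<n. f ((TT^^k) p))) = (\<lambda>Q. dQ2 \<Phi> F \<Delta>t Q (fst p) (snd p))"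
      using xy by (simp add: dQ2_eq fTT)
    then show "convergent (\<lambda>Q. dQ2 \<Phi> F \<Delta>t Q (fst p) (snd p))" using c by simp
  qed
  have XX_ae: "AE p in \<mu> \<Otimes>\<^sub>M \<mu>. p \<in> X \<times> X"
  proof (rule prob_space.AE_prob_1[OF pps])
    have "emeasure (\<mu> \<Otimes>\<^sub>M \<mu>) (X \<times> X) = 1"
      using X_full by (simp add: emeasure_pair_measure_Times)
    then show "measure (\<mu> \<Otimes>\<^sub>M \<mu>) (X \<times> X) = 1" by (simp add: measure_def)
  qed
  have km[measurable]: "(\<lambda>p. k (fst p) (snd p)) \<in> borel_measurable (\<mu> \<Otimes>\<^sub>M \<mu>)"
    unfolding k_def k_inf_def dQ2_def by measurable
  define K where "K x y = indicator X y * k x y" for x y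
  have Km[measurable]: "(\<lambda>p. K (fst p) (snd p)) \<in> borel_measurable (\<mu> \<Otimes>\<^sub>M \<mu>)"
    unfolding K_def by measurable
  have Km2: "(\<lambda>y. K x y) \<in> borel_measurable \<mu>" for x
    using measurable_Pair2[OF Km, of x] space_eq by simp
  have K_range: "0 \<le> K x y \<and> K x y \<le> 1" for x y
    using k_range[of x y] by (auto simp: K_def indicator_def)
  have K_int: "integrable \<mu> (\<lambda>y. K x y)" for x
    by (rule integrable_const_bound[where B=1]) (use K_range Km2 in auto)
  have KK_int: "integrable (\<mu> \<Otimes>\<^sub>M \<mu>) (\<lambda>p. K (fst p) (snd p))"
    by (rule finite_measure.integrable_const_bound[where B=1])
       (use K_range pps in \<open>auto simp: prob_space_def\<close>)
  have rho_eq: "rho \<mu> X \<Phi> F \<Delta>t \<epsilon> x = (\<integral>y. K x y \<partial>\<mu>)" for x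
    by (simp add: rho_def set_lebesgue_integral_def K_def k_def)
  define r where "r x = (\<integral>y. K x y \<partial>\<mu>)" for x
  have rm[measurable]: "r \<in> borel_measurable \<mu>"
  proof -
    have "(\<lambda>x. \<integral>y. (\<lambda>x y. K x y) x y \<partial>\<mu>) \<in> borel_measurable \<mu>"
      by (rule borel_measurable_lebesgue_integral) (use Km in \<open>simp add: case_prod_beta'\<close>)
    then show ?thesis unfolding r_def by simp
  qed
  have r_range: "0 \<le> r x \<and> r x \<le> 1" for x
  proof -
    have "(\<integral>y. K x y \<partial>\<mu>) \<le> (\<integral>y. 1 \<partial>\<mu>)"
      by (intro integral_mono K_int) (use K_range in auto)
    moreover have "0 \<le> (\<integral>y. K x y \<partial>\<mu>)"
      by (intro integral_nonneg_AE AE_I2) (use K_range in auto)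
    ultimately show ?thesis by (simp add: r_def prob_space)
  qed
  have r_int: "integrable \<mu> r"
    by (rule integrable_const_bound[where B=1]) (use r_range in auto)
  define c where "c = (\<integral>x. r x \<partial>\<mu>)"
  have c_eq: "c = integral\<^sup>L (\<mu> \<Otimes>\<^sub>M \<mu>) (\<lambda>p. K (fst p) (snd p))"
    unfolding c_def r_def using PP.integral_fst'[OF KK_int] by simp
  have c_pos: "0 < c"
  proof -
    have "AE p in \<mu> \<Otimes>\<^sub>M \<mu>. 0 < K (fst p) (snd p)"
      using conv_ae XX_ae
    proof eventually_elim
      case (elim p)
      then show ?case using k_pos[of "fst p" "snd p"] by (auto simp: K_def mem_Times_iff)
    qed
    then have "integral\<^sup>L (\<mu> \<Otimes>\<^sub>M \<mu>) (\<lambda>p. 0) < integral\<^sup>L (\<mu> \<Otimes>\<^sub>M \<mu>) (\<lambda>p. K (fst p) (snd p))"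
      by (intro finite_measure.integral_less_AE_space KK_int)
         (use pps in \<open>auto simp: prob_space_def prob_space.emeasure_space_1\<close>)
    then show ?thesis unfolding c_eq by simp
  qed
  have r_inv: "r (T x) = r x" if x: "x \<in> X" for x
  proof -
    have "r (T x) = integral\<^sup>L (distr \<mu> \<mu> T) (\<lambda>y. K (T x) y)" unfolding r_def Tp ..
    also have "\<dots> = (\<integral>y. K (T x) (T y) \<partial>\<mu>)" by (rule integral_distr[OF Tm Km2])
    also have "\<dots> = (\<integral>y. K x y \<partial>\<mu>)"
    proof (rule Bochner_Integration.integral_cong[OF refl])
      fix y show "K (T x) (T y) = K x y"
        using k_inv[OF x, of y] T_X[of y] by (cases "y \<in> X") (auto simp: K_def)
    qed
    finally show ?thesis unfolding r_def .
  qed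
  have ergA: "emeasure \<mu> A = 0 \<or> emeasure \<mu> A = 1" if "A \<in> sets \<mu>" "T -` A \<inter> space \<mu> = A" for A
  proof -
    have "ergodic_map \<mu> T" using erg_dt by (simp add: T_def)
    then have H: "\<forall>A\<in>sets \<mu>. T -` A \<inter> space \<mu> = A \<longrightarrow> emeasure \<mu> A = 0 \<or> emeasure \<mu> A = 1"
      unfolding ergodic_map_def by (rule conjunct2)
    show ?thesis using H that by simp
  qed
  have X_ae: "AE x in \<mu>. x \<in> X"
    by (rule AE_prob_1) (use X_full in \<open>simp add: measure_def\<close>)
  have side: "AE x in \<mu>. \<not> (x \<in> X \<and> P (r x))"
    if Pm: "{x \<in> space \<mu>. x \<in> X \<and> P (r x)} \<in> sets \<mu>"
    and Pc: "\<And>A. A \<in> sets \<mu> \<Longrightarrow> AE x in \<mu>. x \<in> A \<Longrightarrow> (\<And>x. x \<in> A \<Longrightarrow> P (r x)) \<Longrightarrow> False" for P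
  proof -
    define A where "A = {x \<in> space \<mu>. x \<in> X \<and> P (r x)}"
    have Am: "A \<in> sets \<mu>" using Pm by (simp add: A_def)
    have "T -` A \<inter> space \<mu> = A"
    proof (intro set_eqI)
      fix x show "x \<in> T -` A \<inter> space \<mu> \<longleftrightarrow> x \<in> A"
      proof (cases "x \<in> X")
        case True then show ?thesis using T_X[of x] r_inv[OF True] by (simp add: A_def space_eq)
      next
        case False then show ?thesis using T_X[of x] by (simp add: A_def space_eq)
      qed
    qed
    then have "emeasure \<mu> A = 0 \<or> emeasure \<mu> A = 1" using ergA[OF Am] by blast
    moreover have "emeasure \<mu> A \<noteq> 1"
    proof
      assume "emeasure \<mu> A = 1"
      then have "AE x in \<mu>. x \<in> A" by (intro AE_prob_1) (simp add: measure_def)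
      moreover have "\<And>x. x \<in> A \<Longrightarrow> P (r x)" by (simp add: A_def)
      ultimately show False by (rule Pc[OF Am])
    qed
    ultimately have "A \<in> null_sets \<mu>" using Am by (auto intro: null_setsI)
    from AE_not_in[OF this] show ?thesis by eventually_elim (simp add: A_def space_eq)
  qed
  have gt: "AE x in \<mu>. \<not> (x \<in> X \<and> c < r x)"
  proof (rule side)
    show "{x \<in> space \<mu>. x \<in> X \<and> c < r x} \<in> sets \<mu>" by measurable
    fix A assume A: "A \<in> sets \<mu>" "AE x in \<mu>. x \<in> A" "\<And>x. x \<in> A \<Longrightarrow> c < r x"
    have "AE x in \<mu>. c < r x" using A(2) by eventually_elim (use A(3) in auto)
    then have "(\<integral>x. c \<partial>\<mu>) < (\<integral>x. r x \<partial>\<mu>)"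
      by (intro integral_less_AE_space[OF _ r_int]) (simp_all add: emeasure_space_1)
    then show False by (simp add: c_def prob_space)
  qed
  have lt: "AE x in \<mu>. \<not> (x \<in> X \<and> r x < c)"
  proof (rule side)
    show "{x \<in> space \<mu>. x \<in> X \<and> r x < c} \<in> sets \<mu>" by measurable
    fix A assume A: "A \<in> sets \<mu>" "AE x in \<mu>. x \<in> A" "\<And>x. x \<in> A \<Longrightarrow> r x < c"
    have "AE x in \<mu>. r x < c" using A(2) by eventually_elim (use A(3) in auto)
    then have "(\<integral>x. r x \<partial>\<mu>) < (\<integral>x. c \<partial>\<mu>)"
      by (intro integral_less_AE_space[OF r_int]) (simp_all add: emeasure_space_1)
    then show False by (simp add: c_def prob_space)
  qed
  have ae_c: "AE x in \<mu>. rho \<mu> X \<Phi> F \<Delta>t \<epsilon> x = c"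
    using gt lt X_ae
  proof eventually_elim
    case (elim x)
    then show ?case by (simp add: rho_eq r_def[symmetric])
  qed
  have part2: "(\<exists>g. continuous_on X g \<and> (AE x in \<mu>. rho \<mu> X \<Phi> F \<Delta>t \<epsilon> x = g x)) \<and>
            (\<exists>h. continuous_on X h \<and> (AE x in \<mu>. 1 / rho \<mu> X \<Phi> F \<Delta>t \<epsilon> x = h x))"
  proof
    show "\<exists>g. continuous_on X g \<and> (AE x in \<mu>. rho \<mu> X \<Phi> F \<Delta>t \<epsilon> x = g x)"
      using ae_c by (intro exI[of _ "\<lambda>_. c"]) auto
    show "\<exists>h. continuous_on X h \<and> (AE x in \<mu>. 1 / rho \<mu> X \<Phi> F \<Delta>t \<epsilon> x = h x)"
      using ae_c by (intro exI[of _ "\<lambda>_. 1 / c"]) (auto elim: eventually_mono)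
  qed
  show ?thesis using c_pos ae_c part2 by blast
qed


end
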